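(* Let $\lambda>0$, let $E_1,E_2,\ldots$ be i.i.d. $\text{Exp}(\lambda)$ random variables, and let $$X=\prod_{i=1}^{\infty}\min\left\{\sum_{k=1}^iE_k,1\right\}.$$ Then for every $\alpha\in(0,1)$ and all $t>0$, $$\mathbb{P}(X\le t)\le e^{\frac{\alpha\lambda}{1-\alpha}}\,t^{\alpha}.$$ Moreover, for all $t\in(0,1]$, $$\mathbb{P}(X\le t)\le \exp\left\{-\left(\sqrt{-\log t}-\sqrt{\lambda}\right)_+^2\right\},$$ where $x_+=\max\{x,0\}$.
   Context: $\text{Exp}(\lambda)$ denotes the exponential distribution with rate $\lambda$ (mean $1/\lambda$). *)

theory Defs
  imports "HOL-Probability.Probability"
begin

definition infprod_lim :: "(nat \<Rightarrow> real) \<Rightarrow> real" where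
  "infprod_lim f = lim (\<lambda>n. \<Prod>i<n. f i)"

end

theory Submission imports Defs begin

definition hh :: "real \<Rightarrow> real \<Rightarrow> real" where "hh a u = (min u 1) powr (-a)"
definition kk :: "real \<Rightarrow> real \<Rightarrow> real \<Rightarrow> real" where
  "kk l a u = l * ((1 - u powr (1-a))/(1-a) - 1 + u)"
definition GG :: "real \<Rightarrow> real \<Rightarrow> real \<Rightarrow> real" where
  "GG l a u = (if 1 \<le> u then 1 else exp (kk l a u))"
definition psi :: "real \<Rightarrow> real \<Rightarrow> real \<Rightarrow> real" where
  "psi l a u = hh a u * GG l a u"

lemma psi_meas[measurable]: "psi l a \<in> borel_measurable borel"
  unfolding psi_def hh_def GG_def kk_def by measurable

lemma GG_meas[measurable]: "GG l a \<in> borel_measurable borel"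
  unfolding GG_def kk_def by measurable

lemma psi_nonneg: "0 \<le> psi l a u"
  unfolding psi_def hh_def GG_def by auto

lemma GG_nonneg: "0 \<le> GG l a u"
  unfolding GG_def by auto

lemma tail_part:
  assumes l: "0 < l" and b: "1 \<le> b"
  shows "(\<integral>\<^sup>+u. ennreal (l * exp (-l*(u-s)) * psi l a u) * indicator {b..} u \<partial>lborel)
          = ennreal (exp (-l*(b-s)))"
proof -
  have "(\<integral>\<^sup>+u. ennreal (l * exp (-l*(u-s)) * psi l a u) * indicator {b..} u \<partial>lborel)
      = (\<integral>\<^sup>+u. ennreal (l * exp (-l*(u-s))) * indicator {b..} u \<partial>lborel)"
    using b by (intro nn_integral_cong) (auto simp: psi_def hh_def GG_def indicator_def)
  also have "\<dots> = ennreal (0 - (- exp (-l*(b-s))))"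
  proof (rule nn_integral_FTC_atLeast)
    show "(\<lambda>u. l * exp (-l*(u-s))) \<in> borel_measurable borel" by measurable
    show "DERIV (\<lambda>u. - exp (-l*(u-s))) x :> l * exp (-l*(x-s))" for x
      by (auto intro!: derivative_eq_intros)
    show "0 \<le> l * exp (-l*(x-s))" for x using l by auto
    show "((\<lambda>u. - exp (-l*(u-s))) \<longlongrightarrow> 0) at_top"
      using l by real_asymp
  qed
  finally show ?thesis by simp
qed


lemma head_part:
  assumes l: "0 < l" and a: "0 < a" "a < 1" and s: "0 \<le> s" "s < 1"
  shows "(\<integral>\<^sup>+u. ennreal (l * exp (-l*(u-s)) * psi l a u) * indicator {s..1} u \<partial>lborel)
          = ennreal (GG l a s - exp (-l*(1-s)))"
proof -
  define Fn where "Fn u = - exp (-l*(u-s)) * exp (kk l a u)" for u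
  define f' where "f' u = l * exp (-l*(u-s)) * u powr (-a) * exp (kk l a u)" for u
  have kk1: "kk l a 1 = 0" by (simp add: kk_def)
  have "(f' has_integral (Fn 1 - Fn s)) {s..1}"
  proof (rule fundamental_theorem_of_calculus_interior)
    show "s \<le> 1" using s by simp
    show "continuous_on {s..1} Fn"
      unfolding Fn_def kk_def using a s
      by (intro continuous_intros continuous_on_powr') auto
    show "(Fn has_vector_derivative f' x) (at x)" if x: "x \<in> {s<..<1}" for x
    proof -
      have x0: "0 < x" using x s by auto
      have p: "((\<lambda>u. u powr (1-a)) has_real_derivative (1-a) * x powr (-a)) (at x)"
        using has_real_derivative_powr[OF x0, of "1-a"] by simp
      have dk0: "((\<lambda>u. kk l a u) has_real_derivative l * ((0 - (1-a) * x powr (-a))/(1-a) - 0 + 1)) (at x)"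
        unfolding kk_def
        by (intro DERIV_cmult DERIV_add DERIV_diff DERIV_cdivide p DERIV_const DERIV_ident)
      have dk: "((\<lambda>u. kk l a u) has_real_derivative l * (1 - x powr (-a))) (at x)"
        using dk0 a by simp
      have dl: "((\<lambda>u. -l*(u-s)) has_real_derivative -l*(1-0)) (at x)"
        by (intro DERIV_cmult DERIV_diff DERIV_ident DERIV_const)
      note d = DERIV_mult[OF DERIV_minus[OF DERIV_fun_exp[OF dl]] DERIV_fun_exp[OF dk]]
      from d have "(Fn has_real_derivative f' x) (at x)"
        unfolding Fn_def f'_def using x0
        apply (simp add: algebra_simps powr_minus)
        done
      then show ?thesis by (simp add: has_real_derivative_iff_has_vector_derivative)
    qed
  qed
  moreover have "Fn 1 - Fn s = GG l a s - exp (-l*(1-s))"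
    using s kk1 by (simp add: Fn_def GG_def)
  ultimately have I0: "(f' has_integral (GG l a s - exp (-l*(1-s)))) {s..1}" by simp
  have I: "((\<lambda>u. l * exp (-l*(u-s)) * psi l a u) has_integral (GG l a s - exp (-l*(1-s)))) {s..1}"
  proof (rule has_integral_eq[OF _ I0])
    show "f' x = l * exp (-l*(x-s)) * psi l a x" if "x \<in> {s..1}" for x
      using that s kk1
      by (cases "x = 0"; cases "x = 1") (auto simp: f'_def psi_def hh_def GG_def)
  qed
  show ?thesis
    by (rule nn_integral_has_integral_lebesgue'[OF _ I]) (use l psi_nonneg in auto)
qed

lemma GG_ge: assumes l: "0 < l" and a: "0 < a" "a < 1" and s: "0 \<le> s" "s < 1"
  shows "exp (-l*(1-s)) \<le> GG l a s"
proof -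
  have "s powr (1-a) \<le> 1" using s a by (intro powr_le1) auto
  then have "0 \<le> (1 - s powr (1-a))/(1-a)" using a by auto
  then have "0 \<le> l * ((1 - s powr (1-a))/(1-a))" using l by (intro mult_nonneg_nonneg) auto
  moreover have "kk l a s = l * ((1 - s powr (1-a))/(1-a)) + (-l*(1-s))"
    unfolding kk_def by (simp add: algebra_simps)
  ultimately have "-l*(1-s) \<le> kk l a s" by linarith
  then show ?thesis using s by (simp add: GG_def)
qed

lemma key:
  assumes l: "0 < l" and a: "0 < a" "a < 1" and s: "0 \<le> s"
  shows "(\<integral>\<^sup>+x. ennreal (exponential_density l x) * ennreal (psi l a (s + x)) \<partial>lborel)
          \<le> ennreal (GG l a s)"
proof -
  define F where "F u = ennreal (l * exp (-l*(u-s)) * psi l a u) * indicator {s..} u" for u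
  have Fm[measurable]: "F \<in> borel_measurable borel" unfolding F_def by measurable
  have "(\<integral>\<^sup>+x. ennreal (exponential_density l x) * ennreal (psi l a (s + x)) \<partial>lborel)
      = (\<integral>\<^sup>+x. F (s + 1 * x) \<partial>lborel)"
  proof (intro nn_integral_cong)
    fix x :: real
    show "ennreal (exponential_density l x) * ennreal (psi l a (s + x)) = F (s + 1 * x)"
      using l psi_nonneg[of l a "s+x"]
      by (auto simp: F_def exponential_density_def indicator_def ennreal_mult[symmetric] mult.commute)
  qed
  also have "\<dots> = (\<integral>\<^sup>+u. F u \<partial>lborel)"
    using nn_integral_real_affine[OF Fm, of 1 s] by simp
  also have "\<dots> \<le> ennreal (GG l a s)"
  proof (cases "s < 1")
    case True
    have "(\<integral>\<^sup>+u. F u \<partial>lborel) \<le> (\<integral>\<^sup>+u. ennreal (l * exp (-l*(u-s)) * psi l a u) * indicator {s..1} u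
         + ennreal (l * exp (-l*(u-s)) * psi l a u) * indicator {1..} u \<partial>lborel)"
      by (intro nn_integral_mono) (auto simp: F_def indicator_def)
    also have "\<dots> = (\<integral>\<^sup>+u. ennreal (l * exp (-l*(u-s)) * psi l a u) * indicator {s..1} u \<partial>lborel)
         + (\<integral>\<^sup>+u. ennreal (l * exp (-l*(u-s)) * psi l a u) * indicator {1..} u \<partial>lborel)"
      by (rule nn_integral_add) auto
    also have "\<dots> = ennreal (GG l a s - exp (-l*(1-s))) + ennreal (exp (-l*(1-s)))"
      by (simp only: head_part[OF l a s(1) True] tail_part[OF l order_refl])
    also have "\<dots> = ennreal (GG l a s)"
      using GG_ge[OF l a s True] by (subst ennreal_plus[symmetric]) auto
    finally show ?thesis .
  next
    case False
    have "(\<integral>\<^sup>+u. F u \<partial>lborel) = ennreal (exp (-l*(s-s)))"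
      unfolding F_def using False by (intro tail_part[OF l]) auto
    then show ?thesis using False by (simp add: GG_def)
  qed
  finally show ?thesis .
qed

lemma GG_ge1:
  assumes l: "0 < l" and a: "0 < a" "a < 1" and u: "0 \<le> u"
  shows "1 \<le> GG l a u"
proof (cases "1 \<le> u")
  case True then show ?thesis by (simp add: GG_def)
next
  case False
  have "u powr (1-a) \<le> (1-a)*u + a"
  proof (cases "u = 0")
    case True then show ?thesis using a by simp
  next
    case False
    then show ?thesis using Youngs_inequality_0[of "1-a" a u 1] a u by simp
  qed
  then have "0 \<le> (1 - u powr (1-a))/(1-a) - 1 + u"
    using a by (simp add: field_simps)
  then have "0 \<le> kk l a u" unfolding kk_def using l by simp
  then show ?thesis using False by (simp add: GG_def)
qed

lemma GG0: assumes "a < 1" shows "GG l a 0 = exp (a * l / (1 - a))"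
  using assms by (simp add: GG_def kk_def field_simps)


context prob_space begin

lemma Epos:
  fixes E :: "nat \<Rightarrow> 'a \<Rightarrow> real"
  assumes l: "0 < l" and dist: "\<And>i. distributed M lborel (E i) (exponential_density l)"
  shows "AE \<omega> in M. \<forall>k. 0 < E k \<omega>"
proof -
  have k: "AE \<omega> in M. 0 < E k \<omega>" for k
  proof -
    have "\<P>(x in M. 0 < E k x) = 1"
      using exponential_distributedD_gt[OF dist[of k] order_refl l] by simp
    from AE_prob_1[OF this] show ?thesis by eventually_elim auto
  qed
  show ?thesis by (subst AE_all_countable) (use k in blast)
qed

lemma moment:
  fixes E :: "nat \<Rightarrow> 'a \<Rightarrow> real"
  assumes l: "0 < l" and a: "0 < a" "a < 1"
    and indep: "indep_vars (\<lambda>_. borel) E UNIV"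
    and dist: "\<And>i. distributed M lborel (E i) (exponential_density l)"
  shows "(\<integral>\<^sup>+\<omega>. ennreal (\<Prod>i<n. hh a (\<Sum>k<Suc i. E k \<omega>)) * ennreal (GG l a (\<Sum>k<n. E k \<omega>)) \<partial>M)
           \<le> ennreal (GG l a 0)"
proof (induction n)
  case 0
  then show ?case by (simp add: emeasure_space_1)
next
  case (Suc n)
  have Em[measurable]: "E i \<in> borel_measurable M" for i
    using distributed_measurable[OF dist[of i]] by simp
  define Tf where "Tf x = (\<Sum>k<n. x k)" for x :: "nat \<Rightarrow> real"
  define Pf where "Pf x = (\<Prod>i<n. hh a (\<Sum>k<Suc i. x k))" for x :: "nat \<Rightarrow> real"
  define A where "A = PiM {..<n} (\<lambda>_. (borel :: real measure))"
  define B where "B = PiM {n} (\<lambda>_. (borel :: real measure))"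
  define V where "V \<omega> = restrict (\<lambda>i. E i \<omega>) {..<n}" for \<omega>
  define U where "U \<omega> = restrict (\<lambda>i. E i \<omega>) {n}" for \<omega>
  have Tfm[measurable]: "Tf \<in> borel_measurable A" unfolding Tf_def A_def by measurable
  have Pfm[measurable]: "Pf \<in> borel_measurable A" unfolding Pf_def hh_def A_def by measurable
  have Vm[measurable]: "V \<in> measurable M A" unfolding V_def A_def by measurable
  have Um[measurable]: "U \<in> measurable M B" unfolding U_def B_def by measurable
  have compm[measurable]: "(\<lambda>y. y n) \<in> borel_measurable B" unfolding B_def by measurable
  have ind: "indep_var A V B U"
    unfolding A_def B_def V_def U_def by (rule indep_var_restrict[OF indep]) auto
  define g where "g z = ennreal (Pf (fst z)) * ennreal (psi l a (Tf (fst z) + snd z n))"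
    for z :: "(nat \<Rightarrow> real) \<times> (nat \<Rightarrow> real)"
  have gm[measurable]: "g \<in> borel_measurable (A \<Otimes>\<^sub>M B)"
    unfolding g_def by measurable
  have TV: "Tf (V \<omega>) = (\<Sum>k<n. E k \<omega>)" for \<omega>
    unfolding Tf_def V_def by (auto intro!: sum.cong)
  have PV: "Pf (V \<omega>) = (\<Prod>i<n. hh a (\<Sum>k<Suc i. E k \<omega>))" for \<omega>
    unfolding Pf_def V_def by (auto intro!: sum.cong prod.cong)
  have UE: "U \<omega> n = E n \<omega>" for \<omega> unfolding U_def by simp
  have Pf_nn: "0 \<le> Pf x" for x unfolding Pf_def hh_def by (auto intro!: prod_nonneg)
  have sf: "sigma_finite_measure (distr M B U)"
    by (rule prob_space_imp_sigma_finite, rule prob_space_distr) simp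
  have "(\<integral>\<^sup>+\<omega>. ennreal (\<Prod>i<Suc n. hh a (\<Sum>k<Suc i. E k \<omega>)) * ennreal (GG l a (\<Sum>k<Suc n. E k \<omega>)) \<partial>M)
      = (\<integral>\<^sup>+\<omega>. g (V \<omega>, U \<omega>) \<partial>M)"
  proof (intro nn_integral_cong)
    fix \<omega>
    show "ennreal (\<Prod>i<Suc n. hh a (\<Sum>k<Suc i. E k \<omega>)) * ennreal (GG l a (\<Sum>k<Suc n. E k \<omega>)) = g (V \<omega>, U \<omega>)"
      unfolding g_def fst_conv snd_conv TV PV UE psi_def
      using Pf_nn[of "V \<omega>"] unfolding PV
      by (simp add: ennreal_mult[symmetric] hh_def GG_nonneg mult.assoc)
  qed
  also have "\<dots> = (\<integral>\<^sup>+z. g z \<partial>distr M (A \<Otimes>\<^sub>M B) (\<lambda>\<omega>. (V \<omega>, U \<omega>)))"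
    by (rule nn_integral_distr[symmetric]) auto
  also have "\<dots> = (\<integral>\<^sup>+z. g z \<partial>(distr M A V \<Otimes>\<^sub>M distr M B U))"
    using ind by (simp add: indep_var_distribution_eq)
  also have "\<dots> = (\<integral>\<^sup>+x. \<integral>\<^sup>+y. g (x, y) \<partial>distr M B U \<partial>distr M A V)"
    by (rule sigma_finite_measure.nn_integral_fst[OF sf, symmetric]) simp
  also have "\<dots> \<le> (\<integral>\<^sup>+x. ennreal (Pf x) * ennreal (GG l a (Tf x)) \<partial>distr M A V)"
  proof (rule nn_integral_mono_AE)
    have "AE \<omega> in M. 0 \<le> Tf (V \<omega>)"
    proof -
      have ep: "AE \<omega> in M. \<forall>k. 0 < E k \<omega>" by (rule Epos[OF l dist])
      then show ?thesis
      proof eventually_elim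
        case (elim \<omega>)
        show ?case unfolding TV by (intro sum_nonneg) (use elim in \<open>simp add: less_imp_le\<close>)
      qed
    qed
    then have "AE x in distr M A V. 0 \<le> Tf x" by (subst AE_distr_iff[OF Vm]) auto
    then show "AE x in distr M A V. (\<integral>\<^sup>+y. g (x, y) \<partial>distr M B U) \<le> ennreal (Pf x) * ennreal (GG l a (Tf x))"
    proof eventually_elim
        case (elim x)
        have t: "0 \<le> Tf x" using elim .
        have "(\<integral>\<^sup>+y. g (x, y) \<partial>distr M B U) = (\<integral>\<^sup>+\<omega>'. g (x, U \<omega>') \<partial>M)"
        proof -
          have gx: "(\<lambda>y. g (x, y)) \<in> borel_measurable B" unfolding g_def fst_conv snd_conv by measurable
          show ?thesis using nn_integral_distr[OF Um, of "\<lambda>y. g (x, y)"] gx by simp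
        qed
        also have "\<dots> = (\<integral>\<^sup>+\<omega>'. ennreal (Pf x) * ennreal (psi l a (Tf x + E n \<omega>')) \<partial>M)"
          unfolding g_def by (simp add: UE)
        also have "\<dots> = (\<integral>\<^sup>+e. ennreal (Pf x) * ennreal (psi l a (Tf x + e)) \<partial>distr M lborel (E n))"
          by (rule nn_integral_distr[symmetric]) auto
        also have "\<dots> = (\<integral>\<^sup>+e. ennreal (Pf x) * ennreal (psi l a (Tf x + e)) \<partial>density lborel (exponential_density l))"
          using distributed_distr_eq_density[OF dist[of n]] by simp
        also have "\<dots> = (\<integral>\<^sup>+e. ennreal (exponential_density l e) * (ennreal (Pf x) * ennreal (psi l a (Tf x + e))) \<partial>lborel)"
          by (rule nn_integral_density) auto
        also have "\<dots> = ennreal (Pf x) * (\<integral>\<^sup>+e. ennreal (exponential_density l e) * ennreal (psi l a (Tf x + e)) \<partial>lborel)"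
          by (subst nn_integral_cmult[symmetric]) (auto simp: ac_simps)
        also have "\<dots> \<le> ennreal (Pf x) * ennreal (GG l a (Tf x))"
          by (intro mult_left_mono key[OF l a t]) auto
        finally show ?case .
    qed
  qed
  also have "\<dots> = (\<integral>\<^sup>+\<omega>. ennreal (Pf (V \<omega>)) * ennreal (GG l a (Tf (V \<omega>))) \<partial>M)"
    by (rule nn_integral_distr) auto
  also have "\<dots> \<le> ennreal (GG l a 0)"
    using Suc.IH unfolding TV PV .
  finally show ?case .
qed

end

context prob_space begin

lemma markov_pn:
  fixes E :: "nat \<Rightarrow> 'a \<Rightarrow> real"
  assumes l: "0 < l" and a: "0 < a" "a < 1"
    and indep: "indep_vars (\<lambda>_. borel) E UNIV"
    and dist: "\<And>i. distributed M lborel (E i) (exponential_density l)"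
    and t: "0 < t"
  shows "emeasure M {\<omega>\<in>space M. (\<Prod>i<n. min (\<Sum>k\<le>i. E k \<omega>) 1) \<le> t}
           \<le> ennreal (t powr a) * ennreal (GG l a 0)"
proof -
  have Em[measurable]: "E i \<in> borel_measurable M" for i
    using distributed_measurable[OF dist[of i]] by simp
  define B where "B = {\<omega>\<in>space M. (\<Prod>i<n. min (\<Sum>k\<le>i. E k \<omega>) 1) \<le> t}"
  have Bm[measurable]: "B \<in> sets M" unfolding B_def by measurable
  have "emeasure M B = (\<integral>\<^sup>+\<omega>. indicator B \<omega> \<partial>M)" by simp
  also have "\<dots> \<le> (\<integral>\<^sup>+\<omega>. ennreal (t powr a) * (ennreal (\<Prod>i<n. hh a (\<Sum>k<Suc i. E k \<omega>)) * ennreal (GG l a (\<Sum>k<n. E k \<omega>))) \<partial>M)"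
  proof (rule nn_integral_mono_AE)
    have ep: "AE \<omega> in M. \<forall>k. 0 < E k \<omega>" by (rule Epos[OF l dist])
    show "AE \<omega> in M. indicator B \<omega> \<le> ennreal (t powr a) * (ennreal (\<Prod>i<n. hh a (\<Sum>k<Suc i. E k \<omega>)) * ennreal (GG l a (\<Sum>k<n. E k \<omega>)))"
      using ep
    proof eventually_elim
      case (elim \<omega>)
      define p where "p = (\<Prod>i<n. min (\<Sum>k\<le>i. E k \<omega>) 1)"
      have Spos: "0 < (\<Sum>k\<le>i. E k \<omega>)" for i
        using elim by (intro sum_pos) auto
      have ppos: "0 < p" unfolding p_def using Spos by (intro prod_pos) (auto simp: min_def)
      have hp: "(\<Prod>i<n. hh a (\<Sum>k<Suc i. E k \<omega>)) = p powr (-a)"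
        unfolding p_def hh_def prod_powr_distrib by (simp add: lessThan_Suc_atMost)
      have G1: "1 \<le> GG l a (\<Sum>k<n. E k \<omega>)"
        using elim by (intro GG_ge1[OF l a] sum_nonneg) (auto intro: less_imp_le)
      show ?case
      proof (cases "\<omega> \<in> B")
        case True
        then have "p \<le> t" unfolding B_def p_def by simp
        then have "1 \<le> (t / p) powr a" using ppos a by (intro ge_one_powr_ge_zero) auto
        also have "(t / p) powr a = t powr a * p powr (-a)"
          using ppos t by (simp add: powr_divide powr_minus_divide less_imp_le)
        finally have "1 \<le> t powr a * p powr (-a) * GG l a (\<Sum>k<n. E k \<omega>)"
          using G1 by (meson dual_order.trans less_eq_real_def mult_le_cancel_left1 mult_nonneg_nonneg powr_ge_zero zero_le_one)
        then have "ennreal 1 \<le> ennreal (t powr a * p powr (-a) * GG l a (\<Sum>k<n. E k \<omega>))"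
          by (rule ennreal_leI)
        then show ?thesis using True hp GG_nonneg
          by (simp add: ennreal_mult[symmetric] mult.assoc)
      qed simp
    qed
  qed
  also have "\<dots> = ennreal (t powr a) * (\<integral>\<^sup>+\<omega>. ennreal (\<Prod>i<n. hh a (\<Sum>k<Suc i. E k \<omega>)) * ennreal (GG l a (\<Sum>k<n. E k \<omega>)) \<partial>M)"
    by (rule nn_integral_cmult) (unfold hh_def, measurable)
  also have "\<dots> \<le> ennreal (t powr a) * ennreal (GG l a 0)"
    by (intro mult_left_mono moment[OF l a indep dist]) auto
  finally show ?thesis unfolding B_def .
qed

end
theorem theorem1:
  fixes M :: "'a measure" and E :: "nat \<Rightarrow> 'a \<Rightarrow> real" and l :: real
    and X :: "'a \<Rightarrow> real"
  assumes "prob_space M"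
    and "l > 0"
    and "prob_space.indep_vars M (\<lambda>_. borel) E UNIV"
    and "\<And>i. distributed M lborel (E i) (exponential_density l)"
    and "\<And>\<omega>. X \<omega> = infprod_lim (\<lambda>i. min (\<Sum>k\<le>i. E k \<omega>) 1)"
  shows "(\<forall>\<alpha>::real. \<forall>t::real. 0 < \<alpha> \<and> \<alpha> < 1 \<and> 0 < t \<longrightarrow>
            measure M {\<omega> \<in> space M. X \<omega> \<le> t} \<le> exp (\<alpha> * l / (1 - \<alpha>)) * t powr \<alpha>)
       \<and> (\<forall>t::real. 0 < t \<and> t \<le> 1 \<longrightarrow>
            measure M {\<omega> \<in> space M. X \<omega> \<le> t}
              \<le> exp (- ((max (sqrt (- ln t) - sqrt l) 0)\<^sup>2)))"
proof -
  interpret prob_space M by (rule assms(1))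
  note l = assms(2) and indep = assms(3) and dist = assms(4) and Xdef = assms(5)
  have Em[measurable]: "E i \<in> borel_measurable M" for i
    using distributed_measurable[OF dist[of i]] by simp
  define p where "p n \<omega> = (\<Prod>i<n. min (\<Sum>k\<le>i. E k \<omega>) 1)" for n \<omega>
  have ep: "AE \<omega> in M. \<forall>k. 0 < E k \<omega>" by (rule Epos[OF l dist])
  have dec: "p (Suc n) \<omega> \<le> p n \<omega>" if pos: "\<forall>k. 0 < E k \<omega>" for n \<omega>
  proof -
    have mn: "0 \<le> min (\<Sum>k\<le>i. E k \<omega>) 1" for i
      using pos by (simp add: sum_pos less_imp_le)
    have "0 \<le> p n \<omega>" unfolding p_def using mn
      by (auto intro!: prod_nonneg)
    moreover note mn[of n]
    ultimately show ?thesis unfolding p_def by (simp add: mult_left_le)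
  qed
  have part1: "measure M {\<omega> \<in> space M. X \<omega> \<le> t} \<le> exp (\<alpha> * l / (1 - \<alpha>)) * t powr \<alpha>"
    if a: "0 < \<alpha>" "\<alpha> < 1" and t: "0 < t" for \<alpha> t
  proof -
    define C where "C = exp (\<alpha> * l / (1 - \<alpha>))"
    have bnd: "measure M {\<omega> \<in> space M. X \<omega> \<le> t} \<le> C * t' powr \<alpha>" if tt: "t < t'" for t'
    proof -
      have t'0: "0 < t'" using t tt by simp
      define D where "D n = {\<omega>\<in>space M. (\<forall>k. 0 < E k \<omega>) \<and> p n \<omega> \<le> t'}" for n
      have Dm: "D n \<in> sets M" for n unfolding D_def p_def by measurable
      have inc: "incseq D"
        by (rule incseq_SucI) (auto simp: D_def intro: order_trans[OF dec])
      have "AE \<omega> in M. \<omega> \<in> {\<omega> \<in> space M. X \<omega> \<le> t} \<longrightarrow> \<omega> \<in> (\<Union>n. D n)"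
        using ep
      proof eventually_elim
        case (elim \<omega>)
        show ?case
        proof
          assume A: "\<omega> \<in> {\<omega> \<in> space M. X \<omega> \<le> t}"
          have ds: "decseq (\<lambda>n. p n \<omega>)" by (rule decseq_SucI) (rule dec[OF elim])
          have bb: "bdd_below (range (\<lambda>n. p n \<omega>))"
          proof
            fix y assume "y \<in> range (\<lambda>n. p n \<omega>)"
            have mn: "0 \<le> min (\<Sum>k\<le>i. E k \<omega>) 1" for i
              using elim by (simp add: sum_pos less_imp_le)
            from \<open>y \<in> range (\<lambda>n. p n \<omega>)\<close> show "0 \<le> y" unfolding p_def
              using mn by (auto intro!: prod_nonneg)
          qed
          have lim: "(\<lambda>n. p n \<omega>) \<longlonglongrightarrow> (INF n. p n \<omega>)" by (rule LIMSEQ_decseq_INF[OF bb ds])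
          have "X \<omega> = (INF n. p n \<omega>)"
            unfolding Xdef infprod_lim_def using limI[OF lim] by (simp add: p_def)
          then have "(\<lambda>n. p n \<omega>) \<longlonglongrightarrow> X \<omega>" using lim by simp
          moreover have "X \<omega> < t'" using A tt by simp
          ultimately have "eventually (\<lambda>n. p n \<omega> < t') sequentially" by (rule order_tendstoD)
          then obtain n where "p n \<omega> < t'" by (auto dest: eventually_happens)
          then show "\<omega> \<in> (\<Union>n. D n)" using A elim by (auto simp: D_def intro!: exI[of _ n])
        qed
      qed
      then have "emeasure M {\<omega> \<in> space M. X \<omega> \<le> t} \<le> emeasure M (\<Union>n. D n)"
        by (rule emeasure_mono_AE) (use Dm in auto)
      also have "\<dots> = (SUP n. emeasure M (D n))"
        by (rule SUP_emeasure_incseq[symmetric]) (use Dm inc in auto)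
      also have "\<dots> \<le> ennreal (t' powr \<alpha>) * ennreal (GG l \<alpha> 0)"
      proof (rule SUP_least)
        fix n
        have "emeasure M (D n) \<le> emeasure M {\<omega>\<in>space M. (\<Prod>i<n. min (\<Sum>k\<le>i. E k \<omega>) 1) \<le> t'}"
          by (rule emeasure_mono) (auto simp: D_def p_def)
        also have "\<dots> \<le> ennreal (t' powr \<alpha>) * ennreal (GG l \<alpha> 0)"
          by (rule markov_pn[OF l a indep dist t'0])
        finally show "emeasure M (D n) \<le> ennreal (t' powr \<alpha>) * ennreal (GG l \<alpha> 0)" .
      qed
      also have "\<dots> = ennreal (C * t' powr \<alpha>)"
        using a by (simp add: GG0 C_def ennreal_mult[symmetric] mult.commute)
      finally show ?thesis
        by (simp add: emeasure_eq_measure C_def)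
    qed
    have "measure M {\<omega> \<in> space M. X \<omega> \<le> t} \<le> C * t powr \<alpha>"
    proof (rule tendsto_le[OF trivial_limit_at_right_real])
      show "((\<lambda>t'. C * t' powr \<alpha>) \<longlongrightarrow> C * t powr \<alpha>) (at_right t)"
        using t by (intro tendsto_intros) auto
      show "((\<lambda>t'. measure M {\<omega> \<in> space M. X \<omega> \<le> t}) \<longlongrightarrow> measure M {\<omega> \<in> space M. X \<omega> \<le> t}) (at_right t)"
        by simp
      show "eventually (\<lambda>t'. measure M {\<omega> \<in> space M. X \<omega> \<le> t} \<le> C * t' powr \<alpha>) (at_right t)"
        using eventually_at_right_less[of t] by eventually_elim (rule bnd)
    qed
    then show ?thesis by (simp add: C_def)
  qed
  have part2: "measure M {\<omega> \<in> space M. X \<omega> \<le> t} \<le> exp (- ((max (sqrt (- ln t) - sqrt l) 0)\<^sup>2))"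
    if t: "0 < t" "t \<le> 1" for t
  proof (cases "sqrt (- ln t) \<le> sqrt l")
    case True
    then show ?thesis by simp
  next
    case False
    define u where "u = sqrt (- ln t)"
    define v where "v = sqrt l"
    have v0: "0 < v" using l by (simp add: v_def)
    have uv: "v < u" using False by (simp add: u_def v_def)
    have u2: "u\<^sup>2 = - ln t" unfolding u_def using t by simp
    have v2: "v\<^sup>2 = l" unfolding v_def using l by simp
    define \<alpha> where "\<alpha> = 1 - v / u"
    have a: "0 < \<alpha>" "\<alpha> < 1" using uv v0 by (auto simp: \<alpha>_def field_simps)
    have "measure M {\<omega> \<in> space M. X \<omega> \<le> t} \<le> exp (\<alpha> * l / (1 - \<alpha>)) * t powr \<alpha>"
      by (rule part1[OF a t(1)])
    also have "\<dots> = exp (\<alpha> * l / (1 - \<alpha>) + \<alpha> * ln t)"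
      using t by (simp add: powr_def exp_add)
    also have "\<alpha> * l / (1 - \<alpha>) + \<alpha> * ln t = - ((u - v)\<^sup>2)"
    proof -
      have lt: "ln t = - u\<^sup>2" using u2 by simp
      show ?thesis
        using uv v0 unfolding \<alpha>_def lt v2[symmetric] by (simp add: field_simps power2_eq_square)
    qed
    also have "- ((u - v)\<^sup>2) = - ((max (sqrt (- ln t) - sqrt l) 0)\<^sup>2)"
      using uv by (simp add: u_def v_def)
    finally show ?thesis .
  qed
  show ?thesis using part1 part2 by blast
qed

end
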